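(* Let $\mathcal M$ be an o-minimal structure in a language $\mathcal L$ with universe $M$, and $\mathcal N$ an expansion of $\mathcal M$ such that every open definable set is $\mathcal L$-definable and $\mathcal N$ admits a dimension function $\dim$ compatible with $\mathcal M$. Then a finite union of full definable subsets of $M^n$ is full.
   Context: "Definable" means definable in $\mathcal N$ with parameters; "$\mathcal L$-definable" means definable in $\mathcal M$ with parameters. A dimension function compatible with $\mathcal M$ is a map $\dim$ from definable sets to $\{-\infty\}\cup\mathbb N$ such that for all definable $X,Y\subseteq M^n$, $a\in M$: (D1) $\dim\{a\}=0$, $\dim M=1$, $\dim X=-\infty$ iff $X=\emptyset$; (D2) $\dim(X\cup Y)=\max\{\dim X,\dim Y\}$; (D3) for a definable family $\{X_t\}_{t\in I}$ of pairwise disjoint sets: (a) each $\{t\in I:\dim X_t=d\}$ is definable; (b) if all $X_t$ have dimension $k$ then $\dim\bigcup_t X_t=\dim I+k$; (D4) definable bijections preserve $\dim$; (D5) on $\mathcal L$-definable sets $\dim$ is the o-minimal dimension; (D6) every definable $f:M^n\to M$ agrees with an $\mathcal L$-definable $F:M^n\to M$ outside a definable set of dimension $<n$. $cl$ denotes topological closure. A definable set $X$ is full if $\dim(cl(X)\setminus X)<\dim X$. *)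

theory Defs
  imports Main "HOL-Library.Extended_Real"
begin

text \<open>Points of M^n are lists of length n over the universe type 'a.\<close>

definition tuples :: "nat \<Rightarrow> 'a list set" where
  "tuples n = {x. length x = n}"

text \<open>A structure on M in the sense of van den Dries (Tame Topology, Ch. 1):
  S m is the collection of definable (with parameters) subsets of M^m.\<close>

definition is_structure :: "(nat \<Rightarrow> 'a list set set) \<Rightarrow> bool" where
  "is_structure S \<longleftrightarrow>
     (\<forall>m. S m \<subseteq> Pow (tuples m)
        \<and> tuples m \<in> S m
        \<and> (\<forall>A\<in>S m. \<forall>B\<in>S m. A \<union> B \<in> S m)
        \<and> (\<forall>A\<in>S m. tuples m - A \<in> S m)
        \<and> (\<forall>A\<in>S m. {a # x | a x. x \<in> A} \<in> S (Suc m))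
        \<and> (\<forall>A\<in>S m. {x @ [a] | x a. x \<in> A} \<in> S (Suc m))
        \<and> (1 \<le> m \<longrightarrow> {x \<in> tuples m. x ! 0 = x ! (m - 1)} \<in> S m)
        \<and> (\<forall>A\<in>S (Suc m). butlast ` A \<in> S m))"

definition interval_or_point :: "('a::linorder) set \<Rightarrow> bool" where
  "interval_or_point I \<longleftrightarrow>
     (\<exists>a. I = {a}) \<or> (\<exists>a b. I = {a<..<b}) \<or> (\<exists>a. I = {a<..}) \<or> (\<exists>b. I = {..<b})
     \<or> I = UNIV"

definition o_minimal_structure :: "(nat \<Rightarrow> ('a::{dense_linorder,no_bot,no_top}) list set set) \<Rightarrow> bool" where
  "o_minimal_structure S \<longleftrightarrow>
     is_structure S
     \<and> {[x, y] | x y. x < y} \<in> S 2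
     \<and> (\<forall>a. {[a]} \<in> S 1)
     \<and> (\<forall>A\<in>S 1. \<exists>F. finite F \<and> (\<forall>I\<in>F. interval_or_point I) \<and> A = (\<lambda>x. [x]) ` (\<Union>F))"

definition expansion :: "(nat \<Rightarrow> 'a list set set) \<Rightarrow> (nat \<Rightarrow> 'a list set set) \<Rightarrow> bool" where
  "expansion N S \<longleftrightarrow> is_structure N \<and> (\<forall>m. S m \<subseteq> N m)"

text \<open>Order (product) topology on M^n via open boxes.\<close>

definition box :: "('a::linorder) list \<Rightarrow> 'a list \<Rightarrow> 'a list set" where
  "box a b = {x. length x = length a \<and> (\<forall>i<length a. a ! i < x ! i \<and> x ! i < b ! i)}"

definition open_in_tuples :: "nat \<Rightarrow> ('a::linorder) list set \<Rightarrow> bool" where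
  "open_in_tuples n X \<longleftrightarrow> X \<subseteq> tuples n \<and>
     (\<forall>x\<in>X. \<exists>a b. length a = n \<and> length b = n \<and> x \<in> box a b \<and> box a b \<subseteq> X)"

definition cl :: "nat \<Rightarrow> ('a::linorder) list set \<Rightarrow> 'a list set" where
  "cl n X = {x \<in> tuples n. \<forall>a b. length a = n \<and> length b = n \<and> x \<in> box a b \<longrightarrow> box a b \<inter> X \<noteq> {}}"

definition has_interior :: "nat \<Rightarrow> ('a::linorder) list set \<Rightarrow> bool" where
  "has_interior n Y \<longleftrightarrow> (\<exists>a b. length a = n \<and> length b = n \<and> (\<forall>i<n. a ! i < b ! i) \<and> box a b \<subseteq> Y)"

definition coord_proj :: "nat set \<Rightarrow> 'a list \<Rightarrow> 'a list" where
  "coord_proj S x = map (\<lambda>i. x ! i) (sorted_list_of_set S)"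

definition odim :: "nat \<Rightarrow> ('a::linorder) list set \<Rightarrow> ereal" where
  "odim n X = (if X = {} then -\<infinity> else
     ereal (real (Max {card S | S. S \<subseteq> {..<n} \<and> has_interior (card S) (coord_proj S ` X)})))"

definition fiber :: "'a list \<Rightarrow> 'a list set \<Rightarrow> 'a list set" where
  "fiber t Z = {x. t @ x \<in> Z}"

definition dimension_function ::
  "(nat \<Rightarrow> ('a::{dense_linorder,no_bot,no_top}) list set set) \<Rightarrow> (nat \<Rightarrow> 'a list set set)
     \<Rightarrow> ('a list set \<Rightarrow> ereal) \<Rightarrow> bool" where
  "dimension_function N L dm \<longleftrightarrow>
     (\<forall>n. \<forall>X\<in>N n. dm X \<in> insert (-\<infinity>) (range (\<lambda>k::nat. ereal (real k))))
     \<comment> \<open>(D1)\<close>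
     \<and> (\<forall>a. dm {[a]} = 0)
     \<and> dm (tuples 1) = 1
     \<and> (\<forall>n. \<forall>X\<in>N n. dm X = -\<infinity> \<longleftrightarrow> X = {})
     \<comment> \<open>(D2)\<close>
     \<and> (\<forall>n. \<forall>X\<in>N n. \<forall>Y\<in>N n. dm (X \<union> Y) = max (dm X) (dm Y))
     \<comment> \<open>(D3) definable families {fiber t Z}_{t \<in> I}\<close>
     \<and> (\<forall>m n I Z. I \<in> N m \<longrightarrow> Z \<in> N (m + n) \<longrightarrow>
           (\<forall>s\<in>I. \<forall>t\<in>I. s \<noteq> t \<longrightarrow> fiber s Z \<inter> fiber t Z = {}) \<longrightarrow>
           (\<forall>d. {t \<in> I. dm (fiber t Z) = d} \<in> N m)
           \<and> (\<forall>k::nat. (\<forall>t\<in>I. dm (fiber t Z) = ereal (real k)) \<longrightarrow>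
                 dm (\<Union>t\<in>I. fiber t Z) = dm I + ereal (real k)))
     \<comment> \<open>(D4) definable bijections preserve dimension\<close>
     \<and> (\<forall>n m X Y f. X \<in> N n \<longrightarrow> Y \<in> N m \<longrightarrow> bij_betw f X Y \<longrightarrow>
           {x @ f x | x. x \<in> X} \<in> N (n + m) \<longrightarrow> dm X = dm Y)
     \<comment> \<open>(D5)\<close>
     \<and> (\<forall>n. \<forall>X\<in>L n. dm X = odim n X)
     \<comment> \<open>(D6)\<close>
     \<and> (\<forall>n f. {x @ [f x] | x. x \<in> tuples n} \<in> N (Suc n) \<longrightarrow>
           (\<exists>F D. {x @ [F x] | x. x \<in> tuples n} \<in> L (Suc n) \<and> D \<in> N n
                  \<and> dm D < ereal (real n) \<and> (\<forall>x \<in> tuples n - D. f x = F x)))"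

definition full :: "('a list set \<Rightarrow> ereal) \<Rightarrow> nat \<Rightarrow> ('a::linorder) list set \<Rightarrow> bool" where
  "full dm n X \<longleftrightarrow> dm (cl n X - X) < dm X"

end

theory Submission
  imports Defs
begin


definition defn :: "(nat \<Rightarrow> 'a list set set) \<Rightarrow> nat \<Rightarrow> ('a list \<Rightarrow> bool) \<Rightarrow> bool" where
  "defn S m P \<longleftrightarrow> {x \<in> tuples m. P x} \<in> S m"

lemma struct_sub: "is_structure S \<Longrightarrow> A \<in> S m \<Longrightarrow> A \<subseteq> tuples m"
  unfolding is_structure_def by blast

lemma defn_mem: assumes "is_structure S" "A \<in> S m" shows "defn S m (\<lambda>x. x \<in> A)"
proof -
  have "{x \<in> tuples m. x \<in> A} = A" using struct_sub[OF assms] by blast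
  thus ?thesis using assms(2) unfolding defn_def by simp
qed

lemma defn_memD: assumes "is_structure S" "defn S m (\<lambda>x. x \<in> A)" "A \<subseteq> tuples m" shows "A \<in> S m"
proof -
  have "{x \<in> tuples m. x \<in> A} = A" using assms(3) by blast
  thus ?thesis using assms(2) unfolding defn_def by simp
qed

lemma defn_cong: "(\<And>x. length x = m \<Longrightarrow> P x = Q x) \<Longrightarrow> defn S m P \<Longrightarrow> defn S m Q"
proof -
  assume "\<And>x. length x = m \<Longrightarrow> P x = Q x" "defn S m P"
  moreover have "{x \<in> tuples m. P x} = {x \<in> tuples m. Q x}" using calculation(1) by (auto simp: tuples_def)
  ultimately show ?thesis unfolding defn_def by simp
qed

lemma defn_true: "is_structure S \<Longrightarrow> defn S m (\<lambda>x. True)"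
  unfolding defn_def is_structure_def by simp

lemma defn_not: "is_structure S \<Longrightarrow> defn S m P \<Longrightarrow> defn S m (\<lambda>x. \<not> P x)"
proof -
  assume s: "is_structure S" and d: "defn S m P"
  have "tuples m - {x \<in> tuples m. P x} \<in> S m" using s d unfolding defn_def is_structure_def by blast
  moreover have "tuples m - {x \<in> tuples m. P x} = {x \<in> tuples m. \<not> P x}" by blast
  ultimately show ?thesis unfolding defn_def by simp
qed

lemma defn_or: "is_structure S \<Longrightarrow> defn S m P \<Longrightarrow> defn S m Q \<Longrightarrow> defn S m (\<lambda>x. P x \<or> Q x)"
proof -
  assume s: "is_structure S" and d: "defn S m P" "defn S m Q"
  have "{x \<in> tuples m. P x} \<union> {x \<in> tuples m. Q x} \<in> S m" using s d unfolding defn_def is_structure_def by blast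
  moreover have "{x \<in> tuples m. P x} \<union> {x \<in> tuples m. Q x} = {x \<in> tuples m. P x \<or> Q x}" by blast
  ultimately show ?thesis unfolding defn_def by simp
qed

lemma defn_and: "is_structure S \<Longrightarrow> defn S m P \<Longrightarrow> defn S m Q \<Longrightarrow> defn S m (\<lambda>x. P x \<and> Q x)"
proof -
  assume s: "is_structure S" and d: "defn S m P" "defn S m Q"
  have "defn S m (\<lambda>x. \<not> (\<not> P x \<or> \<not> Q x))" using s d by (intro defn_not defn_or) auto
  thus ?thesis by simp
qed

lemma defn_tl: "is_structure S \<Longrightarrow> defn S m P \<Longrightarrow> defn S (Suc m) (\<lambda>x. P (tl x))"
proof -
  assume s: "is_structure S" and d: "defn S m P"
  have "{a # x | a x. x \<in> {y \<in> tuples m. P y}} \<in> S (Suc m)" using s d unfolding defn_def is_structure_def by blast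
  moreover have "{a # x | a x. x \<in> {y \<in> tuples m. P y}} = {x \<in> tuples (Suc m). P (tl x)}"
    apply (auto simp: tuples_def)
    by (metis Suc_length_conv list.sel(3))
  ultimately show ?thesis unfolding defn_def by simp
qed

lemma defn_butlast: "is_structure S \<Longrightarrow> defn S m P \<Longrightarrow> defn S (Suc m) (\<lambda>x. P (butlast x))"
proof -
  assume s: "is_structure S" and d: "defn S m P"
  have "{x @ [a] | x a. x \<in> {y \<in> tuples m. P y}} \<in> S (Suc m)" using s d unfolding defn_def is_structure_def by blast
  moreover have "{x @ [a] | x a. x \<in> {y \<in> tuples m. P y}} = {x \<in> tuples (Suc m). P (butlast x)}"
    apply (auto simp: tuples_def)
    by (metis append_butlast_last_id length_butlast diff_Suc_1 list.size(3) nat.distinct(1))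
  ultimately show ?thesis unfolding defn_def by simp
qed

lemma defn_proj: "is_structure S \<Longrightarrow> defn S (Suc m) P \<Longrightarrow> defn S m (\<lambda>x. \<exists>a. P (x @ [a]))"
proof -
  assume s: "is_structure S" and d: "defn S (Suc m) P"
  have "butlast ` {y \<in> tuples (Suc m). P y} \<in> S m" using s d unfolding defn_def is_structure_def by blast
  moreover have "butlast ` {y \<in> tuples (Suc m). P y} = {x \<in> tuples m. \<exists>a. P (x @ [a])}"
  proof (intro equalityI subsetI)
    fix x assume "x \<in> butlast ` {y \<in> tuples (Suc m). P y}"
    then obtain y where y: "length y = Suc m" "P y" "x = butlast y" by (auto simp: tuples_def)
    then have "y = x @ [last y]" by (metis append_butlast_last_id list.size(3) nat.distinct(1))
    then show "x \<in> {x \<in> tuples m. \<exists>a. P (x @ [a])}" using y by (auto simp: tuples_def intro!: exI[of _ "last y"])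
  next
    fix x assume "x \<in> {x \<in> tuples m. \<exists>a. P (x @ [a])}"
    then obtain a where "length x = m" "P (x @ [a])" by (auto simp: tuples_def)
    then show "x \<in> butlast ` {y \<in> tuples (Suc m). P y}" by (auto simp: tuples_def image_def intro!: exI[of _ "x @ [a]"])
  qed
  ultimately show ?thesis unfolding defn_def by simp
qed

lemma defn_diag0: "is_structure S \<Longrightarrow> 1 \<le> m \<Longrightarrow> defn S m (\<lambda>x. x ! 0 = x ! (m - 1))"
  unfolding defn_def is_structure_def by blast

lemma defn_drop: "is_structure S \<Longrightarrow> defn S m P \<Longrightarrow> defn S (k + m) (\<lambda>x. P (drop k x))"
proof (induction k)
  case 0 then show ?case by simp
next
  case (Suc k)
  have "defn S (Suc (k + m)) (\<lambda>x. P (drop k (tl x)))"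
    using defn_tl[OF Suc.prems(1) Suc.IH[OF Suc.prems]] by simp
  then show ?case by (simp add: drop_Suc)
qed

lemma defn_take: "is_structure S \<Longrightarrow> defn S m P \<Longrightarrow> defn S (m + k) (\<lambda>x. P (take m x))"
proof (induction k)
  case 0
  show ?case apply simp by (rule defn_cong[OF _ 0(2)]) simp
next
  case (Suc k)
  have "defn S (Suc (m + k)) (\<lambda>x. P (take m (butlast x)))"
    using defn_butlast[OF Suc.prems(1) Suc.IH[OF Suc.prems]] by simp
  then have "defn S (Suc (m + k)) (\<lambda>x. P (take m x))"
    by (rule defn_cong[rotated]) (auto simp: butlast_conv_take min_def)
  then show ?case by simp
qed

lemma defn_ex: "is_structure S \<Longrightarrow> defn S (m + k) P \<Longrightarrow> defn S m (\<lambda>x. \<exists>w. length w = k \<and> P (x @ w))"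
proof (induction k arbitrary: P)
  case 0
  have "defn S m P" using 0(2) by simp
  then show ?case by (rule defn_cong[rotated]) simp
next
  case (Suc k)
  have "defn S (m + k) (\<lambda>x. \<exists>a. P (x @ [a]))" using defn_proj[OF Suc.prems(1)] Suc.prems(2) by simp
  from Suc.IH[OF Suc.prems(1) this] show ?case
    apply (rule defn_cong[rotated])
    apply auto
     apply (metis append_assoc length_append_singleton)
    by (metis append_Cons append_Nil append_assoc append_butlast_last_id length_0_conv length_butlast diff_Suc_1 nat.distinct(1))
qed

lemma defn_all_lt: "is_structure S \<Longrightarrow> (\<And>i. i < (k::nat) \<Longrightarrow> defn S m (P i)) \<Longrightarrow> defn S m (\<lambda>x. \<forall>i<k. P i x)"
proof (induction k)
  case 0 then show ?case using defn_true by simp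
next
  case (Suc k)
  have "defn S m (\<lambda>x. (\<forall>i<k. P i x) \<and> P k x)" using Suc by (intro defn_and) auto
  then show ?case by (rule defn_cong[rotated]) (auto simp: less_Suc_eq)
qed

lemma defn_eq_lt: assumes s: "is_structure S" and ij: "i < j" "j < m"
  shows "defn S m (\<lambda>x. x ! i = x ! j)"
proof -
  have "defn S (Suc (j - i)) (\<lambda>y. y ! 0 = y ! (Suc (j - i) - 1))" by (rule defn_diag0[OF s]) simp
  from defn_drop[OF s this, of i]
  have "defn S (i + Suc (j - i)) (\<lambda>x. drop i x ! 0 = drop i x ! (j - i))" by simp
  moreover have "i + Suc (j - i) = Suc j" using ij by simp
  ultimately have "defn S (Suc j) (\<lambda>x. drop i x ! 0 = drop i x ! (j - i))" by simp
  then have "defn S (Suc j) (\<lambda>x. x ! i = x ! j)"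
    by (rule defn_cong[rotated]) (use ij in simp)
  from defn_take[OF s this, of "m - Suc j"]
  have "defn S (Suc j + (m - Suc j)) (\<lambda>x. take (Suc j) x ! i = take (Suc j) x ! j)" by simp
  then have "defn S m (\<lambda>x. take (Suc j) x ! i = take (Suc j) x ! j)" using ij by simp
  then show ?thesis by (rule defn_cong[rotated]) (use ij in simp)
qed

lemma defn_eq: assumes s: "is_structure S" and ij: "i < m" "j < m"
  shows "defn S m (\<lambda>x. x ! i = x ! j)"
proof (cases i j rule: linorder_cases)
  case less then show ?thesis using defn_eq_lt[OF s less ij(2)] by simp
next
  case equal then show ?thesis using defn_true[OF s] by simp
next
  case greater then show ?thesis using defn_eq_lt[OF s greater ij(1)] by (simp add: eq_commute)
qed

lemma defn_pre: assumes s: "is_structure S" and P: "defn S k P" and sg: "\<And>j. j < k \<Longrightarrow> \<sigma> j < m"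
  shows "defn S m (\<lambda>x. P (map (\<lambda>j. x ! \<sigma> j) [0..<k]))"
proof -
  have d1: "defn S (m + k) (\<lambda>z. P (drop m z))" using defn_drop[OF s P, of m] by simp
  have d2: "defn S (m + k) (\<lambda>z. \<forall>j<k. z ! (m + j) = z ! \<sigma> j)"
    proof (intro defn_all_lt[OF s] defn_eq[OF s])
    fix j assume j: "j < k"
    show "m + j < m + k" using j by simp
    show "\<sigma> j < m + k" using sg[OF j] by simp
  qed
  have "defn S m (\<lambda>x. \<exists>w. length w = k \<and> (P (drop m (x @ w)) \<and> (\<forall>j<k. (x @ w) ! (m + j) = (x @ w) ! \<sigma> j)))"
    by (rule defn_ex[OF s defn_and[OF s d1 d2]])
  then show ?thesis
  proof (rule defn_cong[rotated])
    fix x :: "'a list" assume lx: "length x = m"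
    show "(\<exists>w. length w = k \<and> (P (drop m (x @ w)) \<and> (\<forall>j<k. (x @ w) ! (m + j) = (x @ w) ! \<sigma> j))) =
      P (map (\<lambda>j. x ! \<sigma> j) [0..<k])" (is "?L = ?R")
    proof
      assume ?L
      then obtain w where w: "length w = k" "P (drop m (x @ w))" "\<forall>j<k. (x @ w) ! (m + j) = (x @ w) ! \<sigma> j" by blast
      have "w = map (\<lambda>j. x ! \<sigma> j) [0..<k]"
      proof (rule nth_equalityI)
        show "length w = length (map (\<lambda>j. x ! \<sigma> j) [0..<k])" using w by simp
        fix j assume "j < length w"
        then have j: "j < k" using w by simp
        have "w ! j = (x @ w) ! (m + j)" using lx by (simp add: nth_append)
        also have "\<dots> = (x @ w) ! \<sigma> j" using w j by blast
        also have "\<dots> = x ! \<sigma> j" using sg[OF j] lx by (simp add: nth_append)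
        finally show "w ! j = map (\<lambda>j. x ! \<sigma> j) [0..<k] ! j" using j by simp
      qed
      then show ?R using w lx by simp
    next
      assume ?R
      then show ?L using lx sg
        by (intro exI[of _ "map (\<lambda>j. x ! \<sigma> j) [0..<k]"]) (auto simp: nth_append)
    qed
  qed
qed

lemma defn_mem_pre: assumes s: "is_structure S" and A: "A \<in> S k" and sg: "\<And>j. j < k \<Longrightarrow> \<sigma> j < m"
  shows "defn S m (\<lambda>x. map (\<lambda>j. x ! \<sigma> j) [0..<k] \<in> A)"
  using defn_pre[OF s defn_mem[OF s A] sg] .

lemma defn_less: assumes s: "is_structure S" and lt: "{[x, y] | x y. x < y} \<in> S 2" and ij: "i < m" "j < m"
  shows "defn S m (\<lambda>x. (x ! i :: 'a::linorder) < x ! j)"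
proof -
  have "defn S m (\<lambda>x. map (\<lambda>l. x ! (if l = 0 then i else j)) [0..<2] \<in> {[x, y] | x y. x < y})"
    using ij by (intro defn_mem_pre[OF s lt]) auto
  then show ?thesis by (rule defn_cong[rotated]) (simp add: numeral_2_eq_2 upt_Suc)
qed




lemma cl_char:
  assumes X: "X \<subseteq> tuples n" and lx: "length x = n"
  shows "x \<in> cl n X \<longleftrightarrow> \<not> (\<exists>ab. length ab = 2 * n \<and> (\<forall>i<n. ab ! i < x ! i \<and> x ! i < ab ! (n + i)) \<and>
      \<not> (\<exists>y. length y = n \<and> (\<forall>i<n. ab ! i < y ! i \<and> y ! i < ab ! (n + i)) \<and> y \<in> X))"
  (is "?L \<longleftrightarrow> \<not> ?F")
proof
  assume L: ?L
  show "\<not> ?F"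
  proof
    assume ?F
    then obtain ab where ab: "length ab = 2 * n" "\<forall>i<n. ab ! i < x ! i \<and> x ! i < ab ! (n + i)"
      "\<not> (\<exists>y. length y = n \<and> (\<forall>i<n. ab ! i < y ! i \<and> y ! i < ab ! (n + i)) \<and> y \<in> X)" by blast
    define a where "a = take n ab"
    define b where "b = drop n ab"
    have la: "length a = n" and lb: "length b = n" using ab(1) by (auto simp: a_def b_def)
    have ai: "\<And>i. i < n \<Longrightarrow> a ! i = ab ! i" and bi: "\<And>i. i < n \<Longrightarrow> b ! i = ab ! (n + i)"
      using ab(1) by (auto simp: a_def b_def)
    have "x \<in> box a b" using ab(2) la lx ai bi by (auto simp: box_def)
    with L la lb have "box a b \<inter> X \<noteq> {}" unfolding cl_def by blast
    then obtain y where "y \<in> box a b" "y \<in> X" by blast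
    then have "length y = n \<and> (\<forall>i<n. ab ! i < y ! i \<and> y ! i < ab ! (n + i)) \<and> y \<in> X"
      using la ai bi by (auto simp: box_def)
    with ab(3) show False by blast
  qed
next
  assume nF: "\<not> ?F"
  show ?L unfolding cl_def
  proof (intro CollectI conjI allI impI)
    show "x \<in> tuples n" using lx by (simp add: tuples_def)
    fix a b :: "'a list" assume h: "length a = n \<and> length b = n \<and> x \<in> box a b"
    have ab1: "\<forall>i<n. (a @ b) ! i < x ! i \<and> x ! i < (a @ b) ! (n + i)"
      using h by (auto simp: box_def nth_append)
    have "length (a @ b) = 2 * n" using h by simp
    with nF ab1 have "\<exists>y. length y = n \<and> (\<forall>i<n. (a @ b) ! i < y ! i \<and> y ! i < (a @ b) ! (n + i)) \<and> y \<in> X"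
      by blast
    then obtain y where y: "length y = n" "\<forall>i<n. (a @ b) ! i < y ! i \<and> y ! i < (a @ b) ! (n + i)" "y \<in> X" by blast
    have "y \<in> box a b" using y h by (auto simp: box_def nth_append)
    with y(3) show "box a b \<inter> X \<noteq> {}" by blast
  qed
qed

lemma defn_cl:
  fixes X :: "('a::linorder) list set"
  assumes s: "is_structure S" and lt: "{[x, y] | x y. (x::'a) < y} \<in> S 2" and X: "X \<in> S n"
  shows "cl n X \<in> S n"
proof -
  have Xt: "X \<subseteq> tuples n" using struct_sub[OF s X] .
  have d4: "defn S (3 * n + n) (\<lambda>z. ((\<forall>i<n. z ! (n + i) < z ! (3 * n + i)) \<and> (\<forall>i<n. z ! (3 * n + i) < z ! (2 * n + i)))
      \<and> map (\<lambda>j. z ! (3 * n + j)) [0..<n] \<in> X)"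
  proof -
    have a1: "defn S (3 * n + n) (\<lambda>z. \<forall>i<n. z ! (n + i) < z ! (3 * n + i))"
      by (rule defn_all_lt[OF s], rule defn_less[OF s lt]) auto
    have a2: "defn S (3 * n + n) (\<lambda>z. \<forall>i<n. z ! (3 * n + i) < z ! (2 * n + i))"
      by (rule defn_all_lt[OF s], rule defn_less[OF s lt]) auto
    have a3: "defn S (3 * n + n) (\<lambda>z. map (\<lambda>j. z ! (3 * n + j)) [0..<n] \<in> X)"
      by (rule defn_mem_pre[OF s X]) auto
    show ?thesis by (rule defn_and[OF s defn_and[OF s a1 a2] a3])
  qed
  have "defn S (3 * n) (\<lambda>w. \<exists>y. length y = n \<and> (((\<forall>i<n. (w @ y) ! (n + i) < (w @ y) ! (3 * n + i)) \<and> (\<forall>i<n. (w @ y) ! (3 * n + i) < (w @ y) ! (2 * n + i)))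
      \<and> map (\<lambda>j. (w @ y) ! (3 * n + j)) [0..<n] \<in> X))"
    by (rule defn_ex[OF s d4])
  then have e: "defn S (3 * n) (\<lambda>w. \<exists>y. length y = n \<and> (\<forall>i<n. w ! (n + i) < y ! i \<and> y ! i < w ! (2 * n + i)) \<and> y \<in> X)"
  proof (rule defn_cong[rotated])
    fix w :: "'a list" assume lw: "length w = 3 * n"
    have *: "\<And>y. length y = n \<Longrightarrow> map (\<lambda>j. (w @ y) ! (3 * n + j)) [0..<n] = y"
      using lw by (auto intro!: nth_equalityI simp: nth_append)
    show "(\<exists>y. length y = n \<and> (((\<forall>i<n. (w @ y) ! (n + i) < (w @ y) ! (3 * n + i)) \<and> (\<forall>i<n. (w @ y) ! (3 * n + i) < (w @ y) ! (2 * n + i)))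
      \<and> map (\<lambda>j. (w @ y) ! (3 * n + j)) [0..<n] \<in> X)) =
      (\<exists>y. length y = n \<and> (\<forall>i<n. w ! (n + i) < y ! i \<and> y ! i < w ! (2 * n + i)) \<and> y \<in> X)"
      using lw * by (auto simp: nth_append)
  qed
  have d3: "defn S (n + 2 * n) (\<lambda>w. (\<forall>i<n. w ! (n + i) < w ! i \<and> w ! i < w ! (2 * n + i)) \<and>
      \<not> (\<exists>y. length y = n \<and> (\<forall>i<n. w ! (n + i) < y ! i \<and> y ! i < w ! (2 * n + i)) \<and> y \<in> X))"
  proof -
    have "defn S (3 * n) (\<lambda>w. (\<forall>i<n. w ! (n + i) < w ! i \<and> w ! i < w ! (2 * n + i)) \<and>
      \<not> (\<exists>y. length y = n \<and> (\<forall>i<n. w ! (n + i) < y ! i \<and> y ! i < w ! (2 * n + i)) \<and> y \<in> X))"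
    proof -
      have a1: "defn S (3 * n) (\<lambda>w. \<forall>i<n. w ! (n + i) < w ! i \<and> w ! i < w ! (2 * n + i))"
        by (rule defn_all_lt[OF s], rule defn_and[OF s], (rule defn_less[OF s lt]; simp)+)
      show ?thesis by (rule defn_and[OF s a1 defn_not[OF s e]])
    qed
    moreover have eq: "n + 2 * n = 3 * n" by simp
    ultimately show ?thesis unfolding eq by blast
  qed
  have "defn S n (\<lambda>x. \<exists>ab. length ab = 2 * n \<and> ((\<forall>i<n. (x @ ab) ! (n + i) < (x @ ab) ! i \<and> (x @ ab) ! i < (x @ ab) ! (2 * n + i)) \<and>
      \<not> (\<exists>y. length y = n \<and> (\<forall>i<n. (x @ ab) ! (n + i) < y ! i \<and> y ! i < (x @ ab) ! (2 * n + i)) \<and> y \<in> X)))"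
    by (rule defn_ex[OF s d3])
  then have "defn S n (\<lambda>x. \<exists>ab. length ab = 2 * n \<and> (\<forall>i<n. ab ! i < x ! i \<and> x ! i < ab ! (n + i)) \<and>
      \<not> (\<exists>y. length y = n \<and> (\<forall>i<n. ab ! i < y ! i \<and> y ! i < ab ! (n + i)) \<and> y \<in> X))"
  proof (rule defn_cong[rotated])
    fix x :: "'a list" assume lx: "length x = n"
    have "\<And>ab i. i < n \<Longrightarrow> (x @ ab) ! (n + i) = ab ! i" "\<And>ab i. i < n \<Longrightarrow> (x @ ab) ! i = x ! i"
      "\<And>ab i. i < n \<Longrightarrow> (x @ ab) ! (2 * n + i) = ab ! (n + i)"
      using lx by (auto simp: nth_append)
    show "(\<exists>ab. length ab = 2 * n \<and> ((\<forall>i<n. (x @ ab) ! (n + i) < (x @ ab) ! i \<and> (x @ ab) ! i < (x @ ab) ! (2 * n + i)) \<and>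
      \<not> (\<exists>y. length y = n \<and> (\<forall>i<n. (x @ ab) ! (n + i) < y ! i \<and> y ! i < (x @ ab) ! (2 * n + i)) \<and> y \<in> X))) =
      (\<exists>ab. length ab = 2 * n \<and> (\<forall>i<n. ab ! i < x ! i \<and> x ! i < ab ! (n + i)) \<and>
      \<not> (\<exists>y. length y = n \<and> (\<forall>i<n. ab ! i < y ! i \<and> y ! i < ab ! (n + i)) \<and> y \<in> X))"
      using lx by (simp add: nth_append cong: imp_cong)
  qed
  from defn_not[OF s this] have "defn S n (\<lambda>x. x \<in> cl n X)"
    by (rule defn_cong[rotated]) (simp add: cl_char[OF Xt])
  then show ?thesis by (rule defn_memD[OF s]) (auto simp: cl_def)
qed


lemma cl_union: "cl n (A \<union> B) \<subseteq> cl n A \<union> cl n (B :: ('a::linorder) list set)"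
proof
  fix x assume x: "x \<in> cl n (A \<union> B)"
  show "x \<in> cl n A \<union> cl n B"
  proof (rule ccontr)
    assume nAB: "x \<notin> cl n A \<union> cl n B"
    have lx: "x \<in> tuples n" using x by (simp add: cl_def)
    have "\<not> (\<forall>a b. length a = n \<and> length b = n \<and> x \<in> box a b \<longrightarrow> box a b \<inter> A \<noteq> {})"
      using nAB lx unfolding cl_def by blast
    then obtain a b where ab: "length a = n" "length b = n" "x \<in> box a b" "box a b \<inter> A = {}" by blast
    have "\<not> (\<forall>a b. length a = n \<and> length b = n \<and> x \<in> box a b \<longrightarrow> box a b \<inter> B \<noteq> {})"
      using nAB lx unfolding cl_def by blast
    then obtain a' b' where ab': "length a' = n" "length b' = n" "x \<in> box a' b'" "box a' b' \<inter> B = {}" by blast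
    define c where "c = map (\<lambda>i. max (a ! i) (a' ! i)) [0..<n]"
    define d where "d = map (\<lambda>i. min (b ! i) (b' ! i)) [0..<n]"
    have lc: "length c = n" "length d = n" by (simp_all add: c_def d_def)
    have xa: "\<forall>i<n. a ! i < x ! i \<and> x ! i < b ! i" and lxn: "length x = n" using ab(1,3) by (simp_all add: box_def)
    have xa': "\<forall>i<n. a' ! i < x ! i \<and> x ! i < b' ! i" using ab'(1,3) by (simp add: box_def)
    have "x \<in> box c d" unfolding box_def using lxn lc xa xa' by (simp add: c_def d_def)
    with x lc have ne: "box c d \<inter> (A \<union> B) \<noteq> {}" unfolding cl_def by blast
    then obtain y where y: "y \<in> box c d" "y \<in> A \<union> B" by blast
    have ly: "length y = n" and yc: "\<forall>i<n. c ! i < y ! i \<and> y ! i < d ! i" using y(1) lc by (simp_all add: box_def)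
    have "y \<in> box a b" unfolding box_def using ly ab(1) yc by (simp add: c_def d_def)
    moreover have "y \<in> box a' b'" unfolding box_def using ly ab'(1) yc by (simp add: c_def d_def)
    ultimately show False using ab(4) ab'(4) y(2) by blast
  qed
qed

lemma full_union:
  fixes N L :: "nat \<Rightarrow> ('a::{dense_linorder,no_bot,no_top}) list set set"
  assumes s: "is_structure N" and lt: "{[x, y] | x y. (x::'a) < y} \<in> N 2"
    and D2: "\<forall>n. \<forall>X\<in>N n. \<forall>Y\<in>N n. dm (X \<union> Y) = max (dm X) (dm Y)"
    and A: "A \<in> N n" "full dm n A" and B: "B \<in> N n" "full dm n B"
  shows "A \<union> B \<in> N n \<and> full dm n (A \<union> B)"
proof -
  have un: "\<And>X Y. X \<in> N n \<Longrightarrow> Y \<in> N n \<Longrightarrow> X \<union> Y \<in> N n"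
  proof -
    fix X Y assume X: "X \<in> N n" and Y: "Y \<in> N n"
    have "defn N n (\<lambda>x. x \<in> X \<or> x \<in> Y)"
      by (rule defn_or[OF s defn_mem[OF s X] defn_mem[OF s Y]])
    then have "defn N n (\<lambda>x. x \<in> X \<union> Y)" by simp
    then show "X \<union> Y \<in> N n" by (rule defn_memD[OF s]) (use struct_sub[OF s X] struct_sub[OF s Y] in blast)
  qed
  have df: "\<And>X Y. X \<in> N n \<Longrightarrow> Y \<in> N n \<Longrightarrow> X - Y \<in> N n"
  proof -
    fix X Y assume X: "X \<in> N n" and Y: "Y \<in> N n"
    have "defn N n (\<lambda>x. x \<in> X \<and> \<not> x \<in> Y)"
      by (rule defn_and[OF s defn_mem[OF s X] defn_not[OF s defn_mem[OF s Y]]])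
    then have "defn N n (\<lambda>x. x \<in> X - Y)" by simp
    then show "X - Y \<in> N n" by (rule defn_memD[OF s]) (use struct_sub[OF s X] in blast)
  qed
  have mono: "\<And>X Y. X \<in> N n \<Longrightarrow> Y \<in> N n \<Longrightarrow> X \<subseteq> Y \<Longrightarrow> dm X \<le> dm Y"
  proof -
    fix X Y assume X: "X \<in> N n" and Y: "Y \<in> N n" and XY: "X \<subseteq> Y"
    have "dm Y = dm (X \<union> Y)" using XY by (simp add: Un_absorb1)
    also have "\<dots> = max (dm X) (dm Y)" using D2 X Y by blast
    finally show "dm X \<le> dm Y" by (metis max.cobounded1)
  qed
  have AB: "A \<union> B \<in> N n" using un A B by blast
  have cA: "cl n A - A \<in> N n" using df[OF defn_cl[OF s lt A(1)] A(1)] .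
  have cB: "cl n B - B \<in> N n" using df[OF defn_cl[OF s lt B(1)] B(1)] .
  have cAB: "cl n (A \<union> B) - (A \<union> B) \<in> N n" using df[OF defn_cl[OF s lt AB] AB] .
  have sub: "cl n (A \<union> B) - (A \<union> B) \<subseteq> (cl n A - A) \<union> (cl n B - B)" using cl_union by blast
  have "dm (cl n (A \<union> B) - (A \<union> B)) \<le> dm ((cl n A - A) \<union> (cl n B - B))"
    by (rule mono[OF cAB un[OF cA cB] sub])
  also have "\<dots> = max (dm (cl n A - A)) (dm (cl n B - B))" using D2 cA cB by blast
  also have "\<dots> < max (dm A) (dm B)" using A(2) B(2) unfolding full_def
    by (simp add: less_max_iff_disj max_less_iff_conj) (meson le_less_trans not_less less_trans)
  also have "\<dots> = dm (A \<union> B)"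
  proof -
    have "dm (A \<union> B) = max (dm A) (dm B)" using D2 A(1) B(1) by blast
    then show ?thesis by (rule sym)
  qed
  finally show ?thesis using AB unfolding full_def by blast
qed

theorem lemma2p8:
  fixes L N :: "nat \<Rightarrow> ('a::{dense_linorder,no_bot,no_top}) list set set"
    and dm :: "'a list set \<Rightarrow> ereal"
    and n :: nat and \<F> :: "'a list set set"
  assumes "o_minimal_structure L"
    and "expansion N L"
    and "\<And>m X. X \<in> N m \<Longrightarrow> open_in_tuples m X \<Longrightarrow> X \<in> L m"
    and "dimension_function N L dm"
    and "finite \<F>" and "\<F> \<noteq> {}"
    and "\<And>X. X \<in> \<F> \<Longrightarrow> X \<in> N n \<and> full dm n X"
  shows "full dm n (\<Union>\<F>)"
proof -
  have s: "is_structure N" using assms(2) unfolding expansion_def by blast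
  have lt: "{[x, y] | x y. (x::'a) < y} \<in> N 2"
  proof -
    have "{[x, y] | x y. (x::'a) < y} \<in> L 2" using assms(1) unfolding o_minimal_structure_def by (elim conjE) assumption
    moreover have "L 2 \<subseteq> N 2" using assms(2) unfolding expansion_def by blast
    ultimately show ?thesis by blast
  qed
  have D2: "\<forall>n. \<forall>X\<in>N n. \<forall>Y\<in>N n. dm (X \<union> Y) = max (dm X) (dm Y)"
    using assms(4) unfolding dimension_function_def by (elim conjE) assumption
  have "\<Union>\<F> \<in> N n \<and> full dm n (\<Union>\<F>)"
    using assms(5,6,7)
  proof (induction \<F> rule: finite_ne_induct)
    case (singleton x) then show ?case by simp
  next
    case (insert x F)
    have "x \<in> N n" "full dm n x" using insert.prems by auto
    moreover have "\<Union>F \<in> N n \<and> full dm n (\<Union>F)" using insert.IH insert.prems by blast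
    ultimately show ?case using full_union[OF s lt D2] by simp
  qed
  then show ?thesis by blast
qed

end
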